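(* Let $\Psi$ be a root system in a real inner product space, with base $\{\gamma_1,\dots,\gamma_m\}$ and positive roots $\Psi^+$, and let $\mathfrak{s}^+=\{H\in\operatorname{span}\Psi:(H,\gamma_i)>0\text{ for all } i\}$. Let $\Psi_1=\operatorname{span}_{\mathbb{Z}}\{\gamma_2,\dots,\gamma_m\}\cap\Psi$ with positive roots $\Psi_1^+=\Psi_1\cap\Psi^+$, and let $R_1=\{H\in\mathfrak{s}^+:\|H\|\ge1,\ (\gamma_1,H)\ge(\gamma_j,H)\text{ for all } j\}$. Then there exists $C>0$ such that for all $\alpha\in\Psi^+\setminus\Psi_1^+$ and all $H\in R_1$, $$(H,\alpha)\ge C\|H\|.$$
   Context: In the paper $\Psi$ arises as a simple subroot system of an irreducible root system $\Phi$ with base $\Delta$, i.e. $\Psi=\operatorname{span}_{\mathbb{Z}}\{\gamma_1,\dots,\gamma_m\}\cap\Phi$ for some subset $\{\gamma_1,\dots,\gamma_m\}\subseteq\Delta$. *)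

theory Defs
  imports "HOL-Analysis.Analysis"
begin

text \<open>A (finite, reduced, crystallographic) root system in a real inner product
  space, in the sense of Humphreys; it is a root system in its own span.\<close>
definition root_system :: "'a::real_inner set \<Rightarrow> bool" where
  "root_system \<Psi> \<longleftrightarrow>
     finite \<Psi> \<and> 0 \<notin> \<Psi> \<and>
     (\<forall>\<alpha>\<in>\<Psi>. \<forall>\<beta>\<in>\<Psi>. 2 * (\<beta> \<bullet> \<alpha>) / (\<alpha> \<bullet> \<alpha>) \<in> \<int> \<and>
                     \<beta> - (2 * (\<beta> \<bullet> \<alpha>) / (\<alpha> \<bullet> \<alpha>)) *\<^sub>R \<alpha> \<in> \<Psi>) \<and>
     (\<forall>\<alpha>\<in>\<Psi>. \<forall>c::real. c *\<^sub>R \<alpha> \<in> \<Psi> \<longrightarrow> c = 1 \<or> c = -1)"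

definition int_span :: "'a::real_vector set \<Rightarrow> 'a set" where
  "int_span S = {(\<Sum>b\<in>F. of_int (c b) *\<^sub>R b) | F c. finite F \<and> F \<subseteq> S}"

definition is_base :: "'a::real_inner set \<Rightarrow> 'a set \<Rightarrow> bool" where
  "is_base \<Psi> B \<longleftrightarrow> B \<subseteq> \<Psi> \<and> independent B \<and>
     (\<forall>\<alpha>\<in>\<Psi>. \<exists>c::'a \<Rightarrow> int. \<alpha> = (\<Sum>b\<in>B. of_int (c b) *\<^sub>R b) \<and>
                 ((\<forall>b\<in>B. c b \<ge> 0) \<or> (\<forall>b\<in>B. c b \<le> 0)))"

definition positive_roots :: "'a::real_inner set \<Rightarrow> 'a set \<Rightarrow> 'a set" where
  "positive_roots \<Psi> B = {\<alpha>\<in>\<Psi>. \<exists>c::'a \<Rightarrow> int. \<alpha> = (\<Sum>b\<in>B. of_int (c b) *\<^sub>R b) \<and>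
                                   (\<forall>b\<in>B. c b \<ge> 0)}"

end

theory Submission imports Defs begin
lemma GS_step':
  fixes S :: "'a::real_inner set"
  assumes fin: "finite S" and S: "pairwise orthogonal S" and x: "x \<in> span S"
    shows "orthogonal x (a - (\<Sum>b\<in>S. (b \<bullet> a / (b \<bullet> b)) *\<^sub>R b))"
proof -
  have "orthogonal (a - (\<Sum>b\<in>S. (b \<bullet> a / (b \<bullet> b)) *\<^sub>R b)) x"
       if "x \<in> S" for x
  proof -
    have "a \<bullet> x = (\<Sum>y\<in>S. if y = x then y \<bullet> a else 0)"
      by (simp add: fin inner_commute that)
    also have "\<dots> =  (\<Sum>b\<in>S. b \<bullet> a * (b \<bullet> x) / (b \<bullet> b))"
      apply (rule sum.cong [OF refl], simp)
      by (meson S orthogonal_def pairwise_def that)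
   finally show ?thesis
     by (simp add: orthogonal_def algebra_simps inner_sum_left)
  qed
  then show ?thesis
    using orthogonal_to_span orthogonal_commute x by blast
qed

lemma GS_aux:
  fixes S :: "'a::real_inner set"
  assumes "finite T" "finite S" "pairwise orthogonal S"
    shows "\<exists>U. finite U \<and> pairwise orthogonal (S \<union> U) \<and> span (S \<union> U) = span (S \<union> T)"
using assms
proof (induction arbitrary: S)
  case empty then show ?case
    by (rule_tac x="{}" in exI) simp
next
  case (insert a T)
  have 0: "\<And>x y. \<lbrakk>x \<noteq> y; x \<in> S; y \<in> S\<rbrakk> \<Longrightarrow> x \<bullet> y = 0"
    using insert by (simp add: pairwise_def orthogonal_def)
  define a' where "a' = a - (\<Sum>b\<in>S. (b \<bullet> a / (b \<bullet> b)) *\<^sub>R b)"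
  obtain U where finU: "finite U" and orthU: "pairwise orthogonal (S \<union> insert a' U)"
             and spanU: "span (insert a' S \<union> U) = span (insert a' S \<union> T)"
    by (rule exE [OF insert.IH [of "insert a' S"]])
      (auto simp: GS_step' a'_def insert.prems orthogonal_commute
        pairwise_orthogonal_insert span_clauses)
  have "span (S \<union> insert a' U) = span (insert a' (S \<union> T))"
    using spanU by simp
  also have "\<dots> = span (insert a (S \<union> T))"
    by (simp add: a'_def span_neg span_sum span_base span_mul eq_span_insert_eq)
  also have "\<dots> = span (S \<union> insert a T)"
    by simp
  finally show ?case
    using orthU finU by (rule_tac x="insert a' U" in exI) auto
qed

lemma proj_expand:
  fixes V :: "'a::real_inner set"
  assumes fin: "finite V" and orth: "pairwise orthogonal V" and x: "x \<in> span V"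
  shows "x = (\<Sum>b\<in>V. (b \<bullet> x / (b \<bullet> b)) *\<^sub>R b)"
proof -
  define y where "y = x - (\<Sum>b\<in>V. (b \<bullet> x / (b \<bullet> b)) *\<^sub>R b)"
  have "y \<in> span V" unfolding y_def
    by (intro span_diff x span_sum span_mul span_base) auto
  hence "orthogonal y y" using GS_step'[OF fin orth, of y x] unfolding y_def by simp
  hence "y = 0" by (simp add: orthogonal_def)
  thus ?thesis unfolding y_def by simp
qed

lemma norm_bound:
  fixes B :: "'a::real_inner set"
  assumes finB: "finite B"
  shows "\<exists>K\<ge>0. \<forall>x\<in>span B. \<forall>M. (\<forall>b\<in>B. \<bar>b \<bullet> x\<bar> \<le> M) \<longrightarrow> norm x \<le> K * M"
proof -
  obtain U where finU: "finite U" and orthU: "pairwise orthogonal U" and spU: "span U = span B"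
    using GS_aux[OF finB, of "{}"] by auto
  define V where "V = U - {0}"
  have finO: "finite V" using finU V_def by auto
  have orthO: "pairwise orthogonal V" using orthU V_def by (auto simp: pairwise_def)
  have spO: "span V = span B" using spU V_def by simp
  have "\<forall>v\<in>V. \<exists>d. v = (\<Sum>b\<in>B. d b *\<^sub>R b)"
  proof
    fix v assume "v \<in> V"
    hence "v \<in> span B" using spO span_base by blast
    thus "\<exists>d. v = (\<Sum>b\<in>B. d b *\<^sub>R b)" using span_finite[OF finB] by auto
  qed
  then obtain d where d: "\<And>v. v \<in> V \<Longrightarrow> v = (\<Sum>b\<in>B. d v b *\<^sub>R b)" by metis
  define K where "K = (\<Sum>v\<in>V. (\<Sum>b\<in>B. \<bar>d v b\<bar>) / norm v)"
  have K0: "K \<ge> 0" unfolding K_def by (intro sum_nonneg divide_nonneg_nonneg sum_nonneg) auto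
  show ?thesis
  proof (intro exI[of _ K] conjI K0 ballI allI impI)
    fix x M assume x: "x \<in> span B" and M: "\<forall>b\<in>B. \<bar>b \<bullet> x\<bar> \<le> M"
    have xO: "x \<in> span V" using x spO by simp
    have "norm x = norm (\<Sum>v\<in>V. (v \<bullet> x / (v \<bullet> v)) *\<^sub>R v)"
      using proj_expand[OF finO orthO xO] by simp
    also have "\<dots> \<le> (\<Sum>v\<in>V. norm ((v \<bullet> x / (v \<bullet> v)) *\<^sub>R v))" by (rule norm_sum)
    also have "\<dots> \<le> (\<Sum>v\<in>V. (\<Sum>b\<in>B. \<bar>d v b\<bar>) / norm v * M)"
    proof (rule sum_mono)
      fix v assume v: "v \<in> V"
      hence on: "v \<noteq> 0" using V_def by auto
      have "\<bar>v \<bullet> x\<bar> = \<bar>\<Sum>b\<in>B. d v b * (b \<bullet> x)\<bar>"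
        using d[OF v] by (metis (no_types, lifting) inner_scaleR_left inner_sum_left sum.cong)
      also have "\<dots> \<le> (\<Sum>b\<in>B. \<bar>d v b * (b \<bullet> x)\<bar>)" by (rule sum_abs)
      also have "\<dots> \<le> (\<Sum>b\<in>B. \<bar>d v b\<bar> * M)"
        by (rule sum_mono) (use M in \<open>auto simp: abs_mult intro: mult_left_mono\<close>)
      finally have le: "\<bar>v \<bullet> x\<bar> \<le> (\<Sum>b\<in>B. \<bar>d v b\<bar>) * M" by (simp add: sum_distrib_right)
      have "norm ((v \<bullet> x / (v \<bullet> v)) *\<^sub>R v) = \<bar>v \<bullet> x\<bar> / norm v"
        using on by (simp add: power2_norm_eq_inner[symmetric] power2_eq_square)
      also have "\<dots> \<le> (\<Sum>b\<in>B. \<bar>d v b\<bar>) * M / norm v"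
        using le on by (simp add: divide_right_mono)
      finally show "norm ((v \<bullet> x / (v \<bullet> v)) *\<^sub>R v) \<le> (\<Sum>b\<in>B. \<bar>d v b\<bar>) / norm v * M" by simp
    qed
    also have "\<dots> = K * M" unfolding K_def by (simp add: sum_distrib_right)
    finally show "norm x \<le> K * M" .
  qed
qed

theorem lemma2:
  fixes \<Psi> :: "'a::real_inner set" and \<gamma> :: "nat \<Rightarrow> 'a" and m :: nat
  assumes "root_system \<Psi>"
    and "m \<ge> 1"
    and "inj_on \<gamma> {1..m}"
    and "is_base \<Psi> (\<gamma> ` {1..m})"
  defines "splus \<equiv> {H \<in> span \<Psi>. \<forall>i\<in>{1..m}. H \<bullet> \<gamma> i > 0}"
    and "\<Psi>1 \<equiv> int_span (\<gamma> ` {2..m}) \<inter> \<Psi>"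
  defines "\<Psi>1plus \<equiv> \<Psi>1 \<inter> positive_roots \<Psi> (\<gamma> ` {1..m})"
    and "R1 \<equiv> {H \<in> splus. norm H \<ge> 1 \<and> (\<forall>j\<in>{1..m}. \<gamma> 1 \<bullet> H \<ge> \<gamma> j \<bullet> H)}"
  shows "\<exists>C>0. \<forall>\<alpha> \<in> positive_roots \<Psi> (\<gamma> ` {1..m}) - \<Psi>1plus.
           \<forall>H \<in> R1. H \<bullet> \<alpha> \<ge> C * norm H"
proof -
  define B where "B = \<gamma> ` {1..m}"
  have finB: "finite B" unfolding B_def by simp
  have B_split: "B = insert (\<gamma> 1) (\<gamma> ` {2..m})"
  proof -
    have "{1..m} = insert 1 {2..m}" using assms(2) by auto
    thus ?thesis by (simp add: B_def)
  qed
  have g1: "\<gamma> 1 \<notin> \<gamma> ` {2..m}"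
  proof
    assume "\<gamma> 1 \<in> \<gamma> ` {2..m}"
    then obtain k where k: "k \<in> {2..m}" "\<gamma> 1 = \<gamma> k" by auto
    have "1 \<in> {1..m}" "k \<in> {1..m}" using assms(2) k(1) by auto
    hence "1 = k" using inj_onD[OF assms(3) k(2)] by blast
    thus False using k by auto
  qed
  obtain K where K0: "K \<ge> 0" and K: "\<And>x M. x \<in> span B \<Longrightarrow> (\<forall>b\<in>B. \<bar>b \<bullet> x\<bar> \<le> M) \<Longrightarrow> norm x \<le> K * M"
    using norm_bound[OF finB] by blast
  have PsiB: "\<Psi> \<subseteq> span B"
  proof
    fix a assume "a \<in> \<Psi>"
    moreover have "\<forall>\<alpha>\<in>\<Psi>. \<exists>c::'a \<Rightarrow> int. \<alpha> = (\<Sum>b\<in>B. of_int (c b) *\<^sub>R b) \<and>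
                 ((\<forall>b\<in>B. c b \<ge> 0) \<or> (\<forall>b\<in>B. c b \<le> 0))"
      using assms(4) unfolding is_base_def B_def by (elim conjE)
    ultimately obtain c :: "'a \<Rightarrow> int" where "a = (\<Sum>b\<in>B. of_int (c b) *\<^sub>R b)"
      by blast
    thus "a \<in> span B" by (simp add: span_sum span_scale span_base)
  qed
  have spanPsi: "span \<Psi> \<subseteq> span B" using PsiB by (simp add: span_minimal)
  show ?thesis
  proof (intro exI[of _ "1/(K+1)"] conjI ballI)
    show "0 < 1/(K+1)" using K0 by simp
    fix \<alpha> H assume a: "\<alpha> \<in> positive_roots \<Psi> (\<gamma> ` {1..m}) - \<Psi>1plus" and H: "H \<in> R1"
    have Hpos: "\<And>b. b \<in> B \<Longrightarrow> H \<bullet> b > 0" using H unfolding R1_def splus_def B_def by auto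
    have Hle: "\<And>b. b \<in> B \<Longrightarrow> b \<bullet> H \<le> \<gamma> 1 \<bullet> H" using H unfolding R1_def B_def by auto
    have HB: "H \<in> span B" using H spanPsi unfolding R1_def splus_def by auto
    have g1B: "\<gamma> 1 \<in> B" using B_split by simp
    have bnd: "\<forall>b\<in>B. \<bar>b \<bullet> H\<bar> \<le> \<gamma> 1 \<bullet> H"
    proof
      fix b assume b: "b \<in> B"
      have "0 < b \<bullet> H" using Hpos[OF b] by (simp add: inner_commute)
      thus "\<bar>b \<bullet> H\<bar> \<le> \<gamma> 1 \<bullet> H" using Hle[OF b] by simp
    qed
    have nH: "norm H \<le> K * (\<gamma> 1 \<bullet> H)" using K[OF HB bnd] .
    have pos1: "\<gamma> 1 \<bullet> H > 0" using Hpos[OF g1B] by (simp add: inner_commute)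
    obtain c :: "'a \<Rightarrow> int" where ac: "\<alpha> = (\<Sum>b\<in>B. of_int (c b) *\<^sub>R b)" and cnn: "\<forall>b\<in>B. c b \<ge> 0"
      and aPsi: "\<alpha> \<in> \<Psi>"
      using a unfolding positive_roots_def B_def by blast
    have c1: "c (\<gamma> 1) \<ge> 1"
    proof (rule ccontr)
      assume "\<not> c (\<gamma> 1) \<ge> 1"
      hence "c (\<gamma> 1) = 0" using cnn g1B by force
      hence "\<alpha> = (\<Sum>b\<in>\<gamma> ` {2..m}. of_int (c b) *\<^sub>R b)"
        using ac g1 unfolding B_split by (simp add: sum.insert)
      hence "\<exists>F c'. \<alpha> = (\<Sum>b\<in>F. of_int (c' b) *\<^sub>R b) \<and> finite F \<and> F \<subseteq> \<gamma> ` {2..m}"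
        by blast
      hence "\<alpha> \<in> int_span (\<gamma> ` {2..m})" unfolding int_span_def by simp
      hence "\<alpha> \<in> \<Psi>1plus" using a aPsi unfolding \<Psi>1plus_def \<Psi>1_def by simp
      thus False using a by auto
    qed
    have "H \<bullet> \<alpha> = (\<Sum>b\<in>B. of_int (c b) * (H \<bullet> b))"
      unfolding ac by (simp add: inner_sum_right)
    also have "\<dots> = of_int (c (\<gamma> 1)) * (H \<bullet> \<gamma> 1) + (\<Sum>b\<in>\<gamma> ` {2..m}. of_int (c b) * (H \<bullet> b))"
      unfolding B_split using g1 by (simp add: sum.insert)
    also have "\<dots> \<ge> of_int (c (\<gamma> 1)) * (H \<bullet> \<gamma> 1)"
    proof -
      have "\<And>b. b \<in> \<gamma> ` {2..m} \<Longrightarrow> 0 \<le> of_int (c b) * (H \<bullet> b)"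
      proof -
        fix b assume b: "b \<in> \<gamma> ` {2..m}"
        hence bB: "b \<in> B" using B_split by simp
        show "0 \<le> of_int (c b) * (H \<bullet> b)"
          using cnn bB Hpos[OF bB] by (intro mult_nonneg_nonneg) auto
      qed
      hence "0 \<le> (\<Sum>b\<in>\<gamma> ` {2..m}. of_int (c b) * (H \<bullet> b))" by (rule sum_nonneg)
      thus ?thesis by simp
    qed
    finally have ge: "H \<bullet> \<alpha> \<ge> of_int (c (\<gamma> 1)) * (H \<bullet> \<gamma> 1)" .
    have "of_int (c (\<gamma> 1)) * (H \<bullet> \<gamma> 1) \<ge> 1 * (H \<bullet> \<gamma> 1)"
      by (rule mult_right_mono) (use c1 pos1 in \<open>simp_all add: inner_commute\<close>)
    hence "H \<bullet> \<alpha> \<ge> \<gamma> 1 \<bullet> H" using ge by (simp add: inner_commute)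
    moreover have "1/(K+1) * norm H \<le> \<gamma> 1 \<bullet> H"
    proof -
      have "norm H \<le> (K+1) * (\<gamma> 1 \<bullet> H)" using nH pos1 by (simp add: algebra_simps)
      thus ?thesis using K0 by (simp add: divide_le_eq mult.commute)
    qed
    ultimately show "1/(K+1) * norm H \<le> H \<bullet> \<alpha>" by linarith
  qed
qed

end
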